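(* Let $q$ be an odd prime power, $a\in\mathbb{F}_q$, and $n\ge1$ an integer with $\gcd(n+1,q)=1$. Then the code $C_n(a)$ is LCD if and only if $$a\notin\{-\mu+\theta^i+\theta^{-i} : 1\le i\le n\}\cup\{\mu+\theta^i+\theta^{-i} : 1\le i\le n\},$$ where $\mu\in\mathbb{F}_{q^2}$ satisfies $\mu^2=-1$ and $\theta\in\overline{\mathbb{F}}_q$ is a primitive $2(n+1)$-th root of unity.
   Context: For $a\in\mathbb{F}_q$ and $n \ge 1$, $T_n(a)$ denotes the $n\times n$ symmetric tridiagonal Toeplitz matrix over $\mathbb{F}_q$ with all diagonal entries equal to $a$, all entries on the first super- and sub-diagonals equal to $1$, and all other entries $0$. $C_n(a)$ is the $[2n,n]$ linear code over $\mathbb{F}_q$ with generator matrix $[I_n \mid T_n(a)]$. A linear code $C$ is LCD (linear complementary dual) if $C\cap C^\perp=\{0\}$, where $C^\perp$ is the dual with respect to the standard Euclidean inner product. *)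

theory Defs
  imports "HOL-Algebra.Algebraic_Closure_Type"
begin

definition tridiag :: "'a::field \<Rightarrow> nat \<Rightarrow> nat \<Rightarrow> nat \<Rightarrow> 'a" where
  "tridiag a n i j =
     (if i < n \<and> j < n then
        (if i = j then a else if i = j + 1 \<or> j = i + 1 then 1 else 0)
      else 0)"

definition gen_matrix :: "'a::field \<Rightarrow> nat \<Rightarrow> nat \<Rightarrow> nat \<Rightarrow> 'a" where
  "gen_matrix a n i j =
     (if i < n \<and> j < 2 * n then
        (if j < n then (if i = j then 1 else 0) else tridiag a n i (j - n))
      else 0)"

text \<open>Linear code of length m generated by the rows of a k x m matrix G.
  Vectors of length m are functions nat => 'a vanishing outside 0..m-1.\<close>
definition lin_code :: "(nat \<Rightarrow> nat \<Rightarrow> 'a::field) \<Rightarrow> nat \<Rightarrow> nat \<Rightarrow> (nat \<Rightarrow> 'a) set" where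
  "lin_code G k m = {(\<lambda>j. if j < m then (\<Sum>i<k. x i * G i j) else 0) | x. True}"

definition dual_code :: "(nat \<Rightarrow> 'a::field) set \<Rightarrow> nat \<Rightarrow> (nat \<Rightarrow> 'a) set" where
  "dual_code C m = {y. (\<forall>j\<ge>m. y j = 0) \<and> (\<forall>c\<in>C. (\<Sum>j<m. c j * y j) = 0)}"

definition is_LCD :: "(nat \<Rightarrow> 'a::field) set \<Rightarrow> nat \<Rightarrow> bool" where
  "is_LCD C m \<longleftrightarrow> C \<inter> dual_code C m = {\<lambda>_. 0}"

definition C_code :: "nat \<Rightarrow> 'a::field \<Rightarrow> (nat \<Rightarrow> 'a) set" where
  "C_code n a = lin_code (gen_matrix a n) n (2 * n)"

end

theory Submission
  imports Defs
begin


fun rr :: "nat \<Rightarrow> 'b::field \<Rightarrow> 'b" where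
  "rr 0 x = 1" | "rr (Suc 0) x = x" | "rr (Suc (Suc k)) x = x * rr (Suc k) x - rr k x"

fun rp :: "nat \<Rightarrow> 'b::field poly" where
  "rp 0 = 1" | "rp (Suc 0) = pCons 0 1" | "rp (Suc (Suc k)) = pCons 0 (rp (Suc k)) - rp k"

lemma poly_rp: "poly (rp k) x = rr k x"
  by (induction k rule: rp.induct) auto

lemma coeff_rp: "coeff (rp k :: 'b::field poly) k = 1 \<and> (\<forall>j>k. coeff (rp k :: 'b poly) j = 0)"
proof (induction k rule: rp.induct)
  case 1 then show ?case by auto
next
  case 2 then show ?case by (auto simp: coeff_pCons split: nat.splits)
next
  case (3 k)
  have "coeff (rp k :: 'b poly) (Suc (Suc k)) = 0" using 3(2) by (auto dest: spec[of _ "Suc (Suc k)"])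
  with 3 show ?case by (auto simp: coeff_pCons split: nat.splits)
qed

lemma rp_nz: "(rp k :: 'b::field poly) \<noteq> 0"
proof
  assume "(rp k :: 'b poly) = 0"
  then have "coeff (rp k :: 'b poly) k = 0" by simp
  then show False using coeff_rp[of k, where 'b='b] by simp
qed
lemma rp_deg: "degree (rp k) \<le> k" using coeff_rp[of k] by (auto intro: degree_le)

lemma rr_neg: "rr k (-x) = (-1)^k * rr k x"
  by (induction k rule: rp.induct) (auto simp: algebra_simps)

lemma rr_closed:
  assumes "t * s = 1"
  shows "rr k (t + s) * (t - s) = t^(k+1) - s^(k+1)"
proof (induction k rule: rp.induct)
  case 1 then show ?case by simp
next
  case 2 then show ?case using assms by (simp add: algebra_simps power2_eq_square)
next
  case (3 k)
  have e: "(t+s)*(t^(k+2) - s^(k+2)) = t^(k+3) - s^(k+3) + t*s*(t^(k+1) - s^(k+1))"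
    by (simp add: algebra_simps power_Suc numeral_3_eq_3 numeral_2_eq_2)
  have "rr (Suc (Suc k)) (t + s) * (t - s) = (t+s) * (rr (Suc k) (t+s) * (t - s)) - rr k (t+s) * (t-s)"
    by (simp add: algebra_simps)
  also have "\<dots> = (t+s)*(t^(k+2) - s^(k+2)) - (t^(k+1) - s^(k+1))"
    using 3 by simp
  also have "\<dots> = t^(k+3) - s^(k+3)" using e assms by simp
  finally show ?case by (simp add: numeral_3_eq_3)
qed

lemma theta_facts:
  fixes \<theta> :: "'b::field"
  assumes "\<theta>^(2*(n+1)) = 1" "\<forall>k. 0<k \<and> k<2*(n+1) \<longrightarrow> \<theta>^k \<noteq> 1"
  shows "\<theta> \<noteq> 0" "\<theta>^(n+1) = -1"
proof -
  show "\<theta> \<noteq> 0"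
  proof
    assume "\<theta> = 0" then show False using assms(1) by simp
  qed
  have "\<theta>^((n+1)*2) = (\<theta>^(n+1))^2" by (rule power_mult)
  then have "(\<theta>^(n+1))^2 = 1" using assms(1) by (simp add: mult.commute)
  moreover have "\<theta>^(n+1) \<noteq> 1" using assms(2)[rule_format, of "n+1"] by simp
  ultimately show "\<theta>^(n+1) = -1" using power2_eq_1_iff by blast
qed

lemma roots_rr:
  fixes \<theta> :: "'b::field"
  assumes n: "n \<ge> 1" and h1: "\<theta>^(2*(n+1)) = 1" and h2: "\<forall>k. 0<k \<and> k<2*(n+1) \<longrightarrow> \<theta>^k \<noteq> 1"
  shows "{x. rr n x = 0} = {\<theta>^i + inverse \<theta>^i | i. 1 \<le> i \<and> i \<le> n}"
proof -
  have t0: "\<theta> \<noteq> 0" and tn: "\<theta>^(n+1) = -1" using theta_facts[OF h1 h2] by auto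
  define c where "c i = \<theta>^i + inverse \<theta>^i" for i
  have pin: "inverse \<theta> ^ i = inverse (\<theta>^i)" for i by (rule power_inverse)
  have ts: "\<theta>^i * inverse \<theta>^i = 1" for i using t0 unfolding pin by simp
  have root: "rr n (c i) = 0" if i: "1 \<le> i" "i \<le> n" for i
  proof -
    have "(\<theta>^i)^(n+1) = \<theta>^(i*(n+1))" by (rule power_mult[symmetric])
    also have "\<dots> = \<theta>^((n+1)*i)" by (simp add: mult.commute)
    also have "\<dots> = (\<theta>^(n+1))^i" by (rule power_mult)
    finally have a: "(\<theta>^i)^(n+1) = (-1)^i" using tn by simp
    have "(inverse \<theta>^i)^(n+1) = inverse ((\<theta>^i)^(n+1))" unfolding pin by (rule power_inverse)
    also have "\<dots> = inverse ((-1)^i)" using a by simp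
    also have "\<dots> = (-1)^i" by (simp add: power_inverse[symmetric])
    finally have b: "(inverse \<theta>^i)^(n+1) = (-1)^i" .
    have ne: "\<theta>^i \<noteq> inverse \<theta>^i"
    proof
      assume "\<theta>^i = inverse \<theta>^i"
      then have "\<theta>^(2*i) = 1" using ts[of i] by (simp add: power_mult mult.commute power2_eq_square)
      moreover have "0 < 2*i" "2*i < 2*(n+1)" using i by auto
      ultimately show False using h2 by blast
    qed
    have "rr n (c i) * (\<theta>^i - inverse \<theta>^i) = 0"
      unfolding c_def using rr_closed[OF ts[of i], of n] a b by simp
    then show ?thesis using ne by simp
  qed
  have inj: "inj_on c {1..n}"
  proof (rule inj_onI)
    fix i j assume i: "i \<in> {1..n}" and j: "j \<in> {1..n}" and e: "c i = c j"
    have id: "(\<theta>^i - \<theta>^j) * (1 - inverse \<theta>^i * inverse \<theta>^j) = c i - c j"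
    proof -
      have "(\<theta>^i - \<theta>^j) * (1 - inverse \<theta>^i * inverse \<theta>^j)
          = \<theta>^i - \<theta>^j - (\<theta>^i * inverse \<theta>^i) * inverse \<theta>^j + (\<theta>^j * inverse \<theta>^j) * inverse \<theta>^i"
        by (simp add: algebra_simps)
      then show ?thesis unfolding c_def using ts[of i] ts[of j] by simp
    qed
    then have "\<theta>^i = \<theta>^j \<or> inverse \<theta>^i * inverse \<theta>^j = 1" using e by simp
    then show "i = j"
    proof
      assume eq: "\<theta>^i = \<theta>^j"
      show "i = j"
      proof (rule ccontr)
        assume "i \<noteq> j"
        then consider "i < j" | "j < i" by linarith
        then show False
        proof cases
          case 1
          then have "\<theta>^j = \<theta>^i * \<theta>^(j-i)" by (simp add: power_add[symmetric])
          then have "\<theta>^(j-i) = 1" using eq t0 by simp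
          moreover have "0 < j - i" "j - i < 2*(n+1)" using 1 i j by auto
          ultimately show False using h2 by blast
        next
          case 2
          then have "\<theta>^i = \<theta>^j * \<theta>^(i-j)" by (simp add: power_add[symmetric])
          then have "\<theta>^(i-j) = 1" using eq t0 by simp
          moreover have "0 < i - j" "i - j < 2*(n+1)" using 2 i j by auto
          ultimately show False using h2 by blast
        qed
      qed
    next
      assume "inverse \<theta>^i * inverse \<theta>^j = 1"
      then have "inverse (\<theta>^i * \<theta>^j) = 1" unfolding pin by (simp add: inverse_mult_distrib)
      then have "\<theta>^i * \<theta>^j = 1" by (simp only: inverse_eq_1_iff)
      then have "\<theta>^(i+j) = 1" by (simp only: power_add)
      moreover have "0 < i + j" "i + j < 2*(n+1)" using i j by auto
      ultimately show "i = j" using h2 by blast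
    qed
  qed
  have sub: "c ` {1..n} \<subseteq> {x. rr n x = 0}" using root by auto
  have fin: "finite {x::'b. rr n x = 0}" using poly_roots_finite[OF rp_nz[of n]] by (simp add: poly_rp)
  have cardle: "card {x::'b. rr n x = 0} \<le> n"
    using le_trans[OF card_poly_roots_bound[OF rp_nz[of n]] rp_deg[of n]] by (simp add: poly_rp)
  have "card (c ` {1..n}) = n" using card_image[OF inj] by simp
  then have "card (c ` {1..n}) = card {x::'b. rr n x = 0}"
    using cardle card_mono[OF fin sub] by linarith
  then have "c ` {1..n} = {x. rr n x = 0}"
    by (rule card_subset_eq[OF fin sub])
  moreover have "c ` {1..n} = {\<theta>^i + inverse \<theta>^i | i. 1 \<le> i \<and> i \<le> n}"
    unfolding c_def by auto
  ultimately show ?thesis by simp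
qed



definition nb :: "nat \<Rightarrow> (nat \<Rightarrow> 'b::field) \<Rightarrow> nat \<Rightarrow> 'b" where
  "nb n y k = (if 0 < k then y (k-1) else 0) + (if k+1 < n then y (k+1) else 0)"
definition Te :: "nat \<Rightarrow> 'b::field \<Rightarrow> (nat \<Rightarrow> 'b) \<Rightarrow> nat \<Rightarrow> 'b" where
  "Te n b y k = (if k < n then nb n y k + b * y k else 0)"
definition kerT :: "nat \<Rightarrow> 'b::field \<Rightarrow> bool" where
  "kerT n b \<longleftrightarrow> (\<exists>y. (\<exists>k<n. y k \<noteq> 0) \<and> (\<forall>k<n. Te n b y k = 0))"

lemma kerT_vec:
  assumes "n \<ge> 1" "rr n (-b) = 0" "k < n"
  shows "Te n b (\<lambda>k. if k < n then rr k (-b) else 0) k = 0"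
proof (cases k)
  case 0
  show ?thesis
  proof (cases "1 < n")
    case True then show ?thesis using 0 assms by (auto simp: Te_def nb_def)
  next
    case False then have "n = 1" using assms by auto
    then show ?thesis using 0 assms by (auto simp: Te_def nb_def)
  qed
next
  case (Suc j)
  show ?thesis
  proof (cases "k + 1 < n")
    case True
    then show ?thesis using Suc assms by (auto simp: Te_def nb_def algebra_simps)
  next
    case False
    then have "n = Suc (Suc j)" using Suc assms by auto
    then show ?thesis using Suc assms by (auto simp: Te_def nb_def algebra_simps) (metis add.commute neg_eq_iff_add_eq_0)
  qed
qed

lemma kerT_iff:
  assumes n: "n \<ge> 1"
  shows "kerT n b \<longleftrightarrow> rr n (-b) = 0"
proof
  assume r: "rr n (-b) = 0"
  show "kerT n b" unfolding kerT_def
  proof (intro exI[of _ "\<lambda>k. if k < n then rr k (-b) else 0"] conjI)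
    show "\<exists>k<n. (if k < n then rr k (-b) else 0) \<noteq> 0" using n by (intro exI[of _ 0]) auto
    show "\<forall>k<n. Te n b (\<lambda>k. if k < n then rr k (-b) else 0) k = 0" using kerT_vec[OF n r] by auto
  qed
next
  assume "kerT n b"
  then obtain y where nz: "\<exists>k<n. y k \<noteq> 0" and ker: "\<forall>k<n. Te n b y k = 0"
    unfolding kerT_def by blast
  have eq: "nb n y k + b * y k = 0" if "k < n" for k using ker that by (auto simp: Te_def)
  have cl: "k + 1 < n \<longrightarrow> y k = y 0 * rr k (-b) \<and> y (Suc k) = y 0 * rr (Suc k) (-b)" for k
  proof (induction k)
    case 0
    show ?case
    proof
      assume "0 + 1 < n"
      then have "y 1 + b * y 0 = 0" using eq[of 0] n by (simp add: nb_def)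
      then show "y 0 = y 0 * rr 0 (- b) \<and> y (Suc 0) = y 0 * rr (Suc 0) (- b)"
        by (simp add: algebra_simps add_eq_0_iff2)
    qed
  next
    case (Suc k)
    show ?case
    proof
      assume a: "Suc k + 1 < n"
      then have "y k + y (Suc (Suc k)) + b * y (Suc k) = 0" using eq[of "Suc k"] by (simp add: nb_def)
      moreover have "y k = y 0 * rr k (-b)" "y (Suc k) = y 0 * rr (Suc k) (-b)" using Suc a by auto
      ultimately show "y (Suc k) = y 0 * rr (Suc k) (- b) \<and> y (Suc (Suc k)) = y 0 * rr (Suc (Suc k)) (- b)"
        by (auto simp: algebra_simps eq_neg_iff_add_eq_0[symmetric] add_eq_0_iff2)
           (metis add.commute add_diff_cancel_left' diff_minus_eq_add minus_diff_eq)
    qed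
  qed
  have all: "y k = y 0 * rr k (-b)" if "k < n" for k
  proof (cases k)
    case 0 then show ?thesis by simp
  next
    case (Suc j) then show ?thesis using cl[of j] that by auto
  qed
  have y0: "y 0 \<noteq> 0" using nz all by auto
  show "rr n (-b) = 0"
  proof (cases "n = 1")
    case True
    then have "b * y 0 = 0" using eq[of 0] by (simp add: nb_def)
    then show ?thesis using True y0 by simp
  next
    case False
    then obtain m where m: "n = Suc (Suc m)" using n by (metis One_nat_def Suc_le_D le_SucE le_zero_eq)
    then have "y m + b * y (Suc m) = 0" using eq[of "Suc m"] by (simp add: nb_def)
    then have "y 0 * (rr m (-b) + b * rr (Suc m) (-b)) = 0" using all[of m] all[of "Suc m"] m
      by (simp add: algebra_simps)
    then have "rr m (-b) + b * rr (Suc m) (-b) = 0" using y0 by simp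
    then show ?thesis using m by (simp add: algebra_simps) (metis add.commute neg_eq_iff_add_eq_0)
  qed
qed



lemma sum_split2: "(\<Sum>j<2*n. f j) = (\<Sum>j<n. f j) + (\<Sum>k<n. f (k + n)) " for f :: "nat \<Rightarrow> 'b::comm_monoid_add"
proof -
  have "(\<Sum>j<2*n. f j) = (\<Sum>j\<in>{0..<n}. f j) + (\<Sum>j\<in>{n..<2*n}. f j)"
    using sum.atLeastLessThan_concat[of 0 n "2*n" f] by (simp add: atLeast0LessThan)
  also have "(\<Sum>j\<in>{n..<2*n}. f j) = (\<Sum>k<n. f (k + n))"
    using sum.shift_bounds_nat_ivl[of f 0 n n] by (simp add: mult_2 atLeast0LessThan)
  finally show ?thesis by (simp add: atLeast0LessThan)
qed

lemma tridiag_sym: "tridiag a n i k = tridiag a n k i"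
  unfolding tridiag_def by auto

lemma Tv_eq: "(\<Sum>i<n. x i * tridiag a n i k) = Te n a x k"
proof (cases "k < n")
  case False
  then show ?thesis by (simp add: tridiag_def Te_def)
next
  case True
  have pt: "x i * tridiag a n i k = (if i = k then a * x k else 0) + (if 0 < k then (if i = k - 1 then x (k-1) else 0) else 0)
      + (if k + 1 < n then (if i = k + 1 then x (k+1) else 0) else 0)" if "i < n" for i
    using True that by (auto simp: tridiag_def)
  have "(\<Sum>i<n. x i * tridiag a n i k) = (\<Sum>i<n. (if i = k then a * x k else 0) + (if 0 < k then (if i = k - 1 then x (k-1) else 0) else 0)
      + (if k + 1 < n then (if i = k + 1 then x (k+1) else 0) else 0))"
    using pt by (intro sum.cong) auto
  also have "\<dots> = a * x k + (if 0 < k then x (k-1) else 0) + (if k + 1 < n then x (k+1) else 0)"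
    using True by (simp add: sum.distrib)
  finally show ?thesis using True by (simp add: Te_def nb_def algebra_simps)
qed

lemma Te_sym: "(\<Sum>k<n. Te n a z k * w k) = (\<Sum>k<n. z k * Te n a w k)"
proof -
  have "(\<Sum>k<n. Te n a z k * w k) = (\<Sum>k<n. \<Sum>i<n. z i * tridiag a n i k * w k)"
    by (simp add: Tv_eq[symmetric] sum_distrib_right)
  also have "\<dots> = (\<Sum>i<n. \<Sum>k<n. z i * (w k * tridiag a n k i))"
    by (subst sum.swap) (simp add: tridiag_sym algebra_simps)
  also have "\<dots> = (\<Sum>i<n. z i * Te n a w i)"
    by (simp add: Tv_eq[symmetric] sum_distrib_left)
  finally show ?thesis .
qed

definition NN :: "nat \<Rightarrow> 'b::field \<Rightarrow> (nat \<Rightarrow> 'b) \<Rightarrow> nat \<Rightarrow> 'b" where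
  "NN n b y k = y k + Te n b (Te n b y) k"

definition cw :: "nat \<Rightarrow> 'b::field \<Rightarrow> (nat \<Rightarrow> 'b) \<Rightarrow> nat \<Rightarrow> 'b" where
  "cw n a x j = (if j < n then x j else if j < 2*n then Te n a x (j - n) else 0)"

lemma C_code_eq: "C_code n a = {cw n a x | x. True}"
proof -
  have "(\<lambda>j. if j < 2*n then (\<Sum>i<n. x i * gen_matrix a n i j) else 0) = cw n a x" for x
  proof
    fix j
    show "(if j < 2*n then (\<Sum>i<n. x i * gen_matrix a n i j) else 0) = cw n a x j"
    proof (cases "j < n")
      case True
      then have "(\<Sum>i<n. x i * gen_matrix a n i j) = (\<Sum>i<n. if i = j then x j else 0)"
        by (intro sum.cong) (auto simp: gen_matrix_def)
      then show ?thesis using True by (simp add: cw_def)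
    next
      case False
      then show ?thesis using Tv_eq[where x=x and k="j - n"]
        by (auto simp: cw_def gen_matrix_def intro!: sum.cong)
    qed
  qed
  then show ?thesis unfolding C_code_def lin_code_def by auto
qed

lemma inner_cw: "(\<Sum>j<2*n. cw n a z j * cw n a x j) = (\<Sum>k<n. z k * NN n a x k)"
proof -
  have "(\<Sum>j<2*n. cw n a z j * cw n a x j) = (\<Sum>j<n. z j * x j) + (\<Sum>k<n. Te n a z k * Te n a x k)"
    by (simp add: sum_split2 cw_def)
  also have "(\<Sum>k<n. Te n a z k * Te n a x k) = (\<Sum>k<n. z k * Te n a (Te n a x) k)"
    by (rule Te_sym)
  finally show ?thesis by (simp add: NN_def sum.distrib algebra_simps)
qed

lemma Te_cong: "(\<And>j. j < n \<Longrightarrow> x j = y j) \<Longrightarrow> Te n a x k = Te n a y k"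
  by (auto simp: Te_def nb_def)

lemma cw_in: "cw n a z \<in> C_code n a" unfolding C_code_eq by blast

lemma C_code_cases: "c \<in> C_code n a \<Longrightarrow> \<exists>z. c = cw n a z" unfolding C_code_eq by blast

lemma dual_cw:
  "cw n a x \<in> dual_code (C_code n a) (2*n) \<longleftrightarrow> (\<forall>k<n. NN n a x k = 0)"
proof
  assume d: "cw n a x \<in> dual_code (C_code n a) (2*n)"
  have h: "(\<Sum>k<n. z k * NN n a x k) = 0" for z
  proof -
    have "\<forall>c\<in>C_code n a. (\<Sum>j<2*n. c j * cw n a x j) = 0" using d unfolding dual_code_def by simp
    then have "(\<Sum>j<2*n. cw n a z j * cw n a x j) = 0" using cw_in by blast
    then show ?thesis by (simp only: inner_cw)
  qed
  show "\<forall>k<n. NN n a x k = 0"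
  proof (intro allI impI)
    fix k assume "k < n"
    have "(\<Sum>i<n. (if i = k then 1 else 0) * NN n a x i) = NN n a x k"
    proof -
      have "(\<Sum>i<n. (if i = k then 1 else 0) * NN n a x i) = (\<Sum>i<n. if i = k then NN n a x k else 0)"
        by (intro sum.cong) auto
      then show ?thesis using \<open>k < n\<close> by simp
    qed
    then show "NN n a x k = 0" using h[of "\<lambda>i. if i = k then 1 else 0"] by simp
  qed
next
  assume h: "\<forall>k<n. NN n a x k = 0"
  have "\<forall>j\<ge>2*n. cw n a x j = 0" by (simp add: cw_def)
  moreover have "(\<Sum>j<2*n. c j * cw n a x j) = 0" if "c \<in> C_code n a" for c
  proof -
    from C_code_cases[OF that] obtain z where z: "c = cw n a z" by blast
    have "(\<Sum>j<2*n. c j * cw n a x j) = (\<Sum>k<n. z k * NN n a x k)" unfolding z by (rule inner_cw)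
    also have "\<dots> = 0" using h by (intro sum.neutral) simp
    finally show ?thesis .
  qed
  ultimately show "cw n a x \<in> dual_code (C_code n a) (2*n)" unfolding dual_code_def by blast
qed

lemma cw_zero: "cw n a x = (\<lambda>_. 0) \<longleftrightarrow> (\<forall>k<n. x k = 0)"
proof
  assume h: "cw n a x = (\<lambda>_. 0)"
  show "\<forall>k<n. x k = 0"
  proof (intro allI impI)
    fix k assume "k < n"
    have "cw n a x k = 0" using h by simp
    then show "x k = 0" using \<open>k < n\<close> by (simp add: cw_def)
  qed
next
  assume h: "\<forall>k<n. x k = 0"
  then have "Te n a x k = Te n a (\<lambda>_. 0) k" for k by (intro Te_cong) auto
  then have "Te n a x k = 0" for k by (simp add: Te_def nb_def)
  then show "cw n a x = (\<lambda>_. 0)" using h by (auto simp: cw_def)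
qed

lemma LCD_iff:
  fixes a :: "'b::field"
  shows "is_LCD (C_code n a) (2*n) \<longleftrightarrow> \<not> (\<exists>x. (\<exists>k<n. x k \<noteq> 0) \<and> (\<forall>k<n. NN n a x k = 0))"
proof -
  have z0: "(\<lambda>_. 0) = cw n a (\<lambda>_. 0::'b)" using cw_zero[of n a "\<lambda>_. 0"] by simp
  have zin: "(\<lambda>_. 0::'b) \<in> C_code n a \<inter> dual_code (C_code n a) (2*n)"
    using cw_in[of n a "\<lambda>_. 0"] dual_cw[of n a "\<lambda>_. 0"] unfolding z0[symmetric]
    by (simp add: NN_def Te_def nb_def)
  have "is_LCD (C_code n a) (2*n) \<longleftrightarrow> (\<forall>x. cw n a x \<in> dual_code (C_code n a) (2*n) \<longrightarrow> cw n a x = (\<lambda>_. 0))"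
  proof
    assume "is_LCD (C_code n a) (2*n)"
    then have e: "C_code n a \<inter> dual_code (C_code n a) (2*n) = {\<lambda>_. 0}" unfolding is_LCD_def .
    show "\<forall>x. cw n a x \<in> dual_code (C_code n a) (2*n) \<longrightarrow> cw n a x = (\<lambda>_. 0)"
    proof (intro allI impI)
      fix x assume "cw n a x \<in> dual_code (C_code n a) (2*n)"
      then have "cw n a x \<in> C_code n a \<inter> dual_code (C_code n a) (2*n)" using cw_in by simp
      then show "cw n a x = (\<lambda>_. 0)" unfolding e by simp
    qed
  next
    assume h: "\<forall>x. cw n a x \<in> dual_code (C_code n a) (2*n) \<longrightarrow> cw n a x = (\<lambda>_. 0)"
    have "C_code n a \<inter> dual_code (C_code n a) (2*n) \<subseteq> {\<lambda>_. 0}"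
    proof
      fix c assume c: "c \<in> C_code n a \<inter> dual_code (C_code n a) (2*n)"
      then have "c \<in> C_code n a" by simp
      from C_code_cases[OF this] obtain z where z: "c = cw n a z" by blast
      then show "c \<in> {\<lambda>_. 0}" using h c by simp
    qed
    then show "is_LCD (C_code n a) (2*n)" unfolding is_LCD_def using zin by blast
  qed
  also have "\<dots> \<longleftrightarrow> (\<forall>x. (\<forall>k<n. NN n a x k = 0) \<longrightarrow> (\<forall>k<n. x k = 0))"
    by (simp only: dual_cw cw_zero)
  finally show ?thesis by blast
qed



lemma nb_Te:
  assumes "k < n"
  shows "nb n (Te n b y) k = nb n (nb n y) k + b * nb n y k"
proof -
  have e1: "nb n (Te n b y) k = (if 0<k then Te n b y (k-1) else 0) + (if k+1<n then Te n b y (k+1) else 0)"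
    by (rule nb_def)
  have e2: "nb n (nb n y) k = (if 0<k then nb n y (k-1) else 0) + (if k+1<n then nb n y (k+1) else 0)"
    by (rule nb_def)
  have e3: "nb n y k = (if 0<k then y (k-1) else 0) + (if k+1<n then y (k+1) else 0)"
    by (rule nb_def)
  have t1: "0<k \<Longrightarrow> Te n b y (k-1) = nb n y (k-1) + b * y (k-1)" using assms by (simp add: Te_def)
  have t2: "k+1<n \<Longrightarrow> Te n b y (k+1) = nb n y (k+1) + b * y (k+1)" by (simp add: Te_def)
  show ?thesis unfolding e1 e2 e3 using t1 t2
    by (cases "0<k"; cases "k+1<n") (simp_all add: algebra_simps)
qed

lemma Te_comp:
  assumes "k < n"
  shows "Te n b1 (Te n b2 y) k = nb n (nb n y) k + (b1 + b2) * nb n y k + b1 * b2 * y k"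
proof -
  have "Te n b1 (Te n b2 y) k = nb n (Te n b2 y) k + b1 * Te n b2 y k" using assms by (simp add: Te_def)
  also have "Te n b2 y k = nb n y k + b2 * y k" using assms by (simp add: Te_def)
  also have "nb n (Te n b2 y) k = nb n (nb n y) k + b2 * nb n y k" using assms by (rule nb_Te)
  finally show ?thesis by (simp add: algebra_simps)
qed

lemma NN_split:
  fixes A \<nu> :: "'b::field"
  assumes "\<nu>^2 = -1" "k < n"
  shows "Te n (A + \<nu>) (Te n (A - \<nu>) y) k = NN n A y k"
    and "Te n (A - \<nu>) (Te n (A + \<nu>) y) k = NN n A y k"
proof -
  have e1: "(A+\<nu>)*(A-\<nu>) = A*A + 1" and e2: "(A-\<nu>)*(A+\<nu>) = A*A + 1"
    using assms(1) by (simp_all add: algebra_simps power2_eq_square)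
  have s1: "(A+\<nu>)+(A-\<nu>) = A + A" and s2: "(A-\<nu>)+(A+\<nu>) = A + A" by simp_all
  show "Te n (A + \<nu>) (Te n (A - \<nu>) y) k = NN n A y k"
    using assms(2) unfolding NN_def Te_comp[OF assms(2)] e1 s1 by (simp add: algebra_simps)
  show "Te n (A - \<nu>) (Te n (A + \<nu>) y) k = NN n A y k"
    using assms(2) unfolding NN_def Te_comp[OF assms(2)] e2 s2 by (simp add: algebra_simps)
qed

lemma Te_add: "Te n b (\<lambda>j. f j + c * g j) k = Te n b f k + c * Te n b g k"
  by (auto simp: Te_def nb_def algebra_simps)

lemma Te_add_fun: "Te n b (\<lambda>j. f j + c * g j) = (\<lambda>j. Te n b f j + c * Te n b g j)"
  by (rule ext) (rule Te_add)

lemma NN_add: "NN n b (\<lambda>j. f j + c * g j) k = NN n b f k + c * NN n b g k"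
  by (simp add: NN_def Te_add_fun Te_add algebra_simps)

lemma Te_ac: "to_ac (Te n b x k) = Te n (to_ac b) (\<lambda>j. to_ac (x j)) k"
  by (simp add: Te_def nb_def)

lemma Te_ac_fun: "(\<lambda>j. to_ac (Te n b x j)) = Te n (to_ac b) (\<lambda>j. to_ac (x j))"
  by (rule ext) (rule Te_ac)

lemma NN_ac: "to_ac (NN n b x k) = NN n (to_ac b) (\<lambda>j. to_ac (x j)) k"
  by (simp add: NN_def Te_ac_fun[symmetric])

lemma forward:
  fixes a :: "'b::field" and \<mu> :: "'b alg_closure"
  assumes mu: "\<mu>^2 = -1" and x: "\<exists>k<n. x k \<noteq> 0" "\<forall>k<n. NN n a x k = 0"
  shows "kerT n (to_ac a + \<mu>) \<or> kerT n (to_ac a - \<mu>)"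
proof -
  define y where "y = (\<lambda>j. to_ac (x j))"
  define z where "z = Te n (to_ac a - \<mu>) y"
  have Tz: "Te n (to_ac a + \<mu>) z k = 0" if "k < n" for k
    using NN_split(1)[OF mu that, of "to_ac a" y] NN_ac[of n a x k] x(2) that
    unfolding z_def y_def by simp
  have ny: "\<exists>k<n. y k \<noteq> 0" using x(1) unfolding y_def by simp
  show ?thesis
  proof (cases "\<exists>k<n. z k \<noteq> 0")
    case True
    then have "kerT n (to_ac a + \<mu>)" using Tz unfolding kerT_def by blast
    then show ?thesis by simp
  next
    case False
    then have "\<forall>k<n. Te n (to_ac a - \<mu>) y k = 0" unfolding z_def by auto
    then have "kerT n (to_ac a - \<mu>)" using ny unfolding kerT_def by blast
    then show ?thesis by simp
  qed
qed

lemma rr_R: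
  fixes \<nu> :: "'b::field alg_closure"
  assumes nu: "\<nu>^2 = -1" and p: "p = to_ac u + \<nu> * to_ac v"
  shows "\<exists>w. rr k p = to_ac (fst w) + \<nu> * to_ac (snd w)"
proof -
  have mul: "(to_ac u1 + \<nu> * to_ac v1) * (to_ac u2 + \<nu> * to_ac v2)
     = to_ac (u1*u2 - v1*v2) + \<nu> * to_ac (u1*v2 + v1*u2)" for u1 v1 u2 v2
  proof -
    have nn: "\<nu>*\<nu> = -1" using nu by (simp add: power2_eq_square)
    have nn2: "\<nu> * (\<nu> * t) = - t" for t by (simp add: mult.assoc[symmetric] nn)
    have "(to_ac u1 + \<nu> * to_ac v1) * (to_ac u2 + \<nu> * to_ac v2)
       = to_ac u1 * to_ac u2 + (\<nu>*\<nu>) * (to_ac v1 * to_ac v2) + \<nu> * (to_ac u1 * to_ac v2 + to_ac v1 * to_ac u2)"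
      by (simp add: algebra_simps)
    also have "\<dots> = to_ac (u1*u2 - v1*v2) + \<nu> * to_ac (u1*v2 + v1*u2)"
      using nn by simp
    finally show ?thesis .
  qed
  show ?thesis
  proof (induction k rule: rp.induct)
    case 1 show ?case by (intro exI[of _ "(1,0)"]) simp
  next
    case 2 show ?case using p by (intro exI[of _ "(u,v)"]) simp
  next
    case (3 k)
    obtain w1 where w1: "rr (Suc k) p = to_ac (fst w1) + \<nu> * to_ac (snd w1)" using 3 by blast
    obtain w2 where w2: "rr k p = to_ac (fst w2) + \<nu> * to_ac (snd w2)" using 3 by blast
    have "rr (Suc (Suc k)) p = (to_ac u + \<nu> * to_ac v) * (to_ac (fst w1) + \<nu> * to_ac (snd w1))
       - (to_ac (fst w2) + \<nu> * to_ac (snd w2))" using w1 w2 p by simp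
    also have "\<dots> = to_ac (u * fst w1 - v * snd w1 - fst w2) + \<nu> * to_ac (u * snd w1 + v * fst w1 - snd w2)"
      unfolding mul by (simp add: algebra_simps)
    finally show ?case by (intro exI[of _ "(u * fst w1 - v * snd w1 - fst w2, u * snd w1 + v * fst w1 - snd w2)"]) simp
  qed
qed

lemma backward:
  fixes a :: "'b::field" and \<nu> :: "'b alg_closure"
  assumes n: "n \<ge> 1" and nu: "\<nu>^2 = -1" and ker: "kerT n (to_ac a + \<nu>)"
  shows "\<exists>x. (\<exists>k<n. x k \<noteq> 0) \<and> (\<forall>k<n. NN n a x k = 0)"
proof -
  define A where "A = to_ac a"
  have r: "rr n (-(A + \<nu>)) = 0" using ker kerT_iff[OF n, of "to_ac a + \<nu>"] unfolding A_def by simp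
  define y where "y = (\<lambda>k. if k < n then rr k (-(A + \<nu>)) else 0)"
  have Ty: "Te n (A + \<nu>) y = (\<lambda>_. 0)"
  proof
    fix k show "Te n (A + \<nu>) y k = 0"
      using kerT_vec[OF n r] unfolding y_def by (cases "k < n") (auto simp: Te_def)
  qed
  have Ny: "NN n A y k = 0" if "k < n" for k
  proof -
    have "nb n (\<lambda>_. 0::'b alg_closure) k = 0" by (simp add: nb_def)
    then show ?thesis using NN_split(2)[OF nu that, of A y] Ty that by (simp add: Te_def)
  qed
  have y0: "y 0 = 1" using n by (simp add: y_def)
  have "\<forall>k. \<exists>w. y k = to_ac (fst w) + \<nu> * to_ac (snd w)"
  proof
    fix k show "\<exists>w. y k = to_ac (fst w) + \<nu> * to_ac (snd w)"
    proof (cases "k < n")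
      case True
      have "-(A + \<nu>) = to_ac (-a) + \<nu> * to_ac (-1)" unfolding A_def by simp
      from rr_R[OF nu this, of k] show ?thesis using True by (simp add: y_def)
    next
      case False then show ?thesis by (intro exI[of _ "(0,0)"]) (simp add: y_def)
    qed
  qed
  from choice[OF this] obtain W where W0: "\<forall>k. y k = to_ac (fst (W k)) + \<nu> * to_ac (snd (W k))" by blast
  have W: "y k = to_ac (fst (W k)) + \<nu> * to_ac (snd (W k))" for k using W0 by simp
  define u where "u = (\<lambda>k. fst (W k))"
  define v where "v = (\<lambda>k. snd (W k))"
  have yuv: "y = (\<lambda>j. to_ac (u j) + \<nu> * to_ac (v j))" using W unfolding u_def v_def by auto
  have lin: "to_ac (NN n a u k) + \<nu> * to_ac (NN n a v k) = 0" if "k < n" for k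
    using Ny[OF that] unfolding yuv NN_add A_def NN_ac by simp
  show ?thesis
  proof (cases "\<nu> \<in> range to_ac")
    case True
    then obtain m where m: "\<nu> = to_ac m" by auto
    define w where "w = (\<lambda>j. u j + m * v j)"
    have "to_ac (NN n a w k) = 0" if "k < n" for k
      using lin[OF that] unfolding w_def m NN_add by simp
    moreover have "w 0 \<noteq> 0"
    proof
      assume "w 0 = 0"
      then have "to_ac (w 0) = 0" by simp
      then have "to_ac (u 0) + \<nu> * to_ac (v 0) = 0" unfolding w_def m by simp
      moreover have "y 0 = to_ac (u 0) + \<nu> * to_ac (v 0)" using yuv by simp
      ultimately show False using y0 by simp
    qed
    ultimately show ?thesis using n by (intro exI[of _ w]) (auto intro!: exI[of _ 0])
  next
    case False
    have both: "NN n a u k = 0 \<and> NN n a v k = 0" if "k < n" for k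
    proof (cases "NN n a v k = 0")
      case True then show ?thesis using lin[OF that] by simp
    next
      case nz: False
      have "\<nu> = to_ac (- NN n a u k / NN n a v k)"
        using lin[OF that] nz by (simp add: field_simps eq_neg_iff_add_eq_0)
      then have "\<exists>x. \<nu> = to_ac x" by blast
      then show ?thesis using False by auto
    qed
    have "u 0 \<noteq> 0 \<or> v 0 \<noteq> 0"
    proof (rule ccontr)
      assume "\<not> (u 0 \<noteq> 0 \<or> v 0 \<noteq> 0)"
      then have "y 0 = 0" unfolding yuv by simp
      then show False using y0 by simp
    qed
    moreover have "0 < n" using n by simp
    ultimately show ?thesis using both by blast
  qed
qed


lemma l1: "(x + m = c + d) \<longleftrightarrow> (x = - m + c + d)" for x m c d :: "'b::ab_group_add"
  by (metis add.commute add.assoc add_minus_cancel)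
lemma l2: "(x - m = c + d) \<longleftrightarrow> (x = m + c + d)" for x m c d :: "'b::ab_group_add"
  by (metis add.assoc add_diff_cancel_left' diff_add_cancel add.commute)


lemma kerT_roots:
  fixes \<theta> b :: "'b::field"
  assumes n: "n \<ge> 1" and h1: "\<theta>^(2*(n+1)) = 1" and h2: "\<forall>k. 0<k \<and> k<2*(n+1) \<longrightarrow> \<theta>^k \<noteq> 1"
  shows "kerT n b \<longleftrightarrow> b \<in> {\<theta>^i + inverse \<theta>^i | i. 1 \<le> i \<and> i \<le> n}"
proof -
  have "kerT n b \<longleftrightarrow> rr n b = 0" using kerT_iff[OF n, of b] rr_neg[of n b] by simp
  also have "\<dots> \<longleftrightarrow> b \<in> {x. rr n x = 0}" by simp
  finally show ?thesis using roots_rr[OF n h1 h2] by simp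
qed

theorem theorem2p4:
  fixes a :: "'a::{field,finite}" and n :: nat
    and \<mu> \<theta> :: "'a alg_closure"
  assumes "odd (card (UNIV :: 'a set))"
    and "n \<ge> 1"
    and "coprime (n + 1) (card (UNIV :: 'a set))"
    and "\<mu>\<^sup>2 = -1"
    and "\<theta> ^ (2 * (n + 1)) = 1"
    and "\<forall>k. 0 < k \<and> k < 2 * (n + 1) \<longrightarrow> \<theta> ^ k \<noteq> 1"
  shows "is_LCD (C_code n a) (2 * n) \<longleftrightarrow>
           to_ac a \<notin> {- \<mu> + \<theta> ^ i + inverse \<theta> ^ i | i. 1 \<le> i \<and> i \<le> n}
                   \<union> {\<mu> + \<theta> ^ i + inverse \<theta> ^ i | i. 1 \<le> i \<and> i \<le> n}"
proof -
  have mu2: "(-\<mu>)^2 = -1" using assms(4) by simp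
  have eqv: "(\<exists>x. (\<exists>k<n. x k \<noteq> 0) \<and> (\<forall>k<n. NN n a x k = 0)) \<longleftrightarrow> kerT n (to_ac a + \<mu>) \<or> kerT n (to_ac a - \<mu>)"
  proof
    assume "\<exists>x. (\<exists>k<n. x k \<noteq> 0) \<and> (\<forall>k<n. NN n a x k = 0)"
    then obtain x where "\<exists>k<n. x k \<noteq> 0" "\<forall>k<n. NN n a x k = 0" by blast
    then show "kerT n (to_ac a + \<mu>) \<or> kerT n (to_ac a - \<mu>)" by (rule forward[OF assms(4)])
  next
    assume "kerT n (to_ac a + \<mu>) \<or> kerT n (to_ac a - \<mu>)"
    then show "\<exists>x. (\<exists>k<n. x k \<noteq> 0) \<and> (\<forall>k<n. NN n a x k = 0)"
    proof
      assume "kerT n (to_ac a + \<mu>)"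
      then show ?thesis by (rule backward[OF assms(2) assms(4)])
    next
      assume "kerT n (to_ac a - \<mu>)"
      then have "kerT n (to_ac a + - \<mu>)" by simp
      then show ?thesis by (rule backward[OF assms(2) mu2])
    qed
  qed
  have k1: "kerT n (to_ac a + \<mu>) \<longleftrightarrow> to_ac a \<in> {- \<mu> + \<theta> ^ i + inverse \<theta> ^ i | i. 1 \<le> i \<and> i \<le> n}"
    unfolding kerT_roots[OF assms(2) assms(5) assms(6)] mem_Collect_eq l1 ..
  have k2: "kerT n (to_ac a - \<mu>) \<longleftrightarrow> to_ac a \<in> {\<mu> + \<theta> ^ i + inverse \<theta> ^ i | i. 1 \<le> i \<and> i \<le> n}"
    unfolding kerT_roots[OF assms(2) assms(5) assms(6)] mem_Collect_eq l2 ..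
  show ?thesis unfolding LCD_iff eqv k1 k2 by blast
qed


end
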